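(* Let $2\le p<\infty$, let $g\in L^p(\mathbb R)$ with $\|g\|_p=1$, and let $\Lambda\subset\mathbb R\times\mathbb R$ be countable such that $\mathcal G(g;\Lambda)$ is a $K$-unconditional basic sequence in $L^p(\mathbb R)$. Let $\delta>0$ satisfy $\sup_{0<t<\delta}\|\tau_tg-g\|_p\le\frac12$ and put $\Lambda_k=\{(t,s)\in\Lambda:k\delta\le t<(k+1)\delta\}$. Then there are constants $c,C>0$ depending only on $p$ and $K$ such that for every $k\in\mathbb Z$ and every finitely supported family of scalars $\{a_{ts}\}_{(t,s)\in\Lambda_k}$, $$c\Big(\sum_{(t,s)\in\Lambda_k}|a_{ts}|^2\Big)^{1/2}\le\Big\|\sum_{(t,s)\in\Lambda_k}a_{ts}e_s\tau_tg\Big\|_p\le C\Big(\sum_{(t,s)\in\Lambda_k}|a_{ts}|^2\Big)^{1/2}.$$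
   Context: $(\tau_t g)(x)=g(x-t)$, $e_s(x)=e^{2\pi i s x}$, $\mathcal G(g;\Lambda)=\{e_s\tau_t g:(t,s)\in\Lambda\}$. A $K$-unconditional basic sequence $\{u_n\}$ is a basis of its closed span with $\|\sum\theta_na_nu_n\|\le K\|\sum a_nu_n\|$ for all finitely supported scalars and $|\theta_n|\le 1$. *)

theory Defs
  imports "HOL-Analysis.Analysis"
begin

definition memLp :: "real \<Rightarrow> (real \<Rightarrow> complex) \<Rightarrow> bool" where
  "memLp p f \<longleftrightarrow> f \<in> borel_measurable lebesgue \<and>
     integrable lebesgue (\<lambda>x. cmod (f x) powr p)"

definition Lp_norm :: "real \<Rightarrow> (real \<Rightarrow> complex) \<Rightarrow> real" where
  "Lp_norm p f = (\<integral>x. cmod (f x) powr p \<partial>lebesgue) powr (1 / p)"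

definition transl :: "real \<Rightarrow> (real \<Rightarrow> complex) \<Rightarrow> real \<Rightarrow> complex" where
  "transl t g = (\<lambda>x. g (x - t))"

definition modul :: "real \<Rightarrow> real \<Rightarrow> complex" where
  "modul s = (\<lambda>x. exp (2 * pi * \<i> * complex_of_real (s * x)))"

definition gabor_atom :: "(real \<Rightarrow> complex) \<Rightarrow> real \<times> real \<Rightarrow> real \<Rightarrow> complex" where
  "gabor_atom g ts = (\<lambda>x. modul (snd ts) x * transl (fst ts) g x)"

definition in_closed_span :: "real \<Rightarrow> ('i \<Rightarrow> real \<Rightarrow> complex) \<Rightarrow> 'i set \<Rightarrow> (real \<Rightarrow> complex) \<Rightarrow> bool" where
  "in_closed_span p u I f \<longleftrightarrow> memLp p f \<and>
     (\<forall>\<epsilon>>0. \<exists>F a. finite F \<and> F \<subseteq> I \<and>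
        Lp_norm p (\<lambda>x. f x - (\<Sum>i\<in>F. a i * u i x)) < \<epsilon>)"

definition basic_sequence :: "real \<Rightarrow> ('i \<Rightarrow> real \<Rightarrow> complex) \<Rightarrow> 'i set \<Rightarrow> bool" where
  "basic_sequence p u I \<longleftrightarrow> (\<forall>i\<in>I. memLp p (u i)) \<and>
     (\<exists>\<nu>. let J = (if finite I then {..<card I} else UNIV) in
        bij_betw \<nu> J I \<and>
        (\<forall>f. in_closed_span p u I f \<longrightarrow>
           (\<exists>!a::nat \<Rightarrow> complex. (\<forall>n. n \<notin> J \<longrightarrow> a n = 0) \<and>
              (\<lambda>N. Lp_norm p (\<lambda>x. f x - (\<Sum>n\<in>J \<inter> {..<N}. a n * u (\<nu> n) x)))
                \<longlonglongrightarrow> 0)))"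

definition K_unconditional_basic :: "real \<Rightarrow> real \<Rightarrow> ('i \<Rightarrow> real \<Rightarrow> complex) \<Rightarrow> 'i set \<Rightarrow> bool" where
  "K_unconditional_basic p K u I \<longleftrightarrow> basic_sequence p u I \<and>
     (\<forall>F a \<theta>. finite F \<and> F \<subseteq> I \<and> (\<forall>i. cmod (\<theta> i) \<le> 1) \<longrightarrow>
        Lp_norm p (\<lambda>x. \<Sum>i\<in>F. \<theta> i * a i * u i x)
          \<le> K * Lp_norm p (\<lambda>x. \<Sum>i\<in>F. a i * u i x))"

end

theory Submission
  imports Defs "HOL-Analysis.Analysis"
begin


lemma fact_double_ge: "2 ^ k * fact k \<le> (fact (2 * k) :: real)"
proof (induction k)
  case 0 then show ?case by simp
next
  case (Suc k)
  have "fact (2 * Suc k) = (of_nat (2*k+2) * of_nat (2*k+1)) * (fact (2 * k) :: real)"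
    by (simp add: fact_Suc algebra_simps)
  also have "\<dots> \<ge> (2 * of_nat (Suc k)) * (2 ^ k * fact k)"
    using Suc by (intro mult_mono) auto
  finally show ?case by (simp add: algebra_simps)
qed



lemma cosh_term_le:
  fixes x :: real
  shows "(if even n then x ^ n /\<^sub>R fact n else 0) \<le> (if even n then (x\<^sup>2/2) ^ (n div 2) /\<^sub>R fact (n div 2) else 0)"
proof (cases "even n")
  case True
  then obtain k where n: "n = 2 * k" by (rule evenE)
  have xn: "x ^ (2*k) = (x\<^sup>2) ^ k" by (metis power_mult)
  have xx: "0 \<le> (x\<^sup>2) ^ k" by simp
  have "x ^ (2*k) / fact (2*k) \<le> (x\<^sup>2)^k / (2^k * fact k)"
    unfolding xn by (intro divide_left_mono fact_double_ge xx) auto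
  also have "\<dots> = (x\<^sup>2/2)^k / fact k" by (simp add: power_divide)
  finally have "x ^ (2*k) / fact (2*k) \<le> (x\<^sup>2/2)^k / fact k" .
  moreover have "x ^ n /\<^sub>R fact n = x ^ (2*k) / fact (2*k)"
    unfolding n by (simp add: field_simps)
  moreover have "(x\<^sup>2/2) ^ (n div 2) /\<^sub>R fact (n div 2) = (x\<^sup>2/2)^k / fact k"
    unfolding n by (simp add: field_simps)
  ultimately show ?thesis using True by simp
next
  case False then show ?thesis by simp
qed


lemma cosh_le_exp_sq: "cosh (x::real) \<le> exp (x\<^sup>2 / 2)"
proof -
  have e0: "(\<lambda>n. if even n then (\<lambda>k. (x\<^sup>2/2) ^ k /\<^sub>R fact k) (n div 2) else 0) sums (0 + exp (x\<^sup>2/2))"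
    by (rule sums_if[OF sums_zero exp_converges])
  have e: "(\<lambda>n. if even n then (x\<^sup>2/2) ^ (n div 2) /\<^sub>R fact (n div 2) else 0) sums exp (x\<^sup>2/2)"
    using e0 by (simp only: add_0)
  have c: "(\<lambda>n. if even n then x ^ n /\<^sub>R fact n else 0) sums cosh x" by (rule cosh_converges)
  show ?thesis by (rule sums_le[OF _ c e]) (rule cosh_term_le)
qed



definition SV :: "'a set \<Rightarrow> ('a \<Rightarrow> real) set" where
  "SV S = PiE S (\<lambda>_. {-1, 1})"

definition avgS :: "'a set \<Rightarrow> (('a \<Rightarrow> real) \<Rightarrow> real) \<Rightarrow> real" where
  "avgS S f = (\<Sum>e\<in>SV S. f e) / 2 ^ card S"

definition ssum :: "'a set \<Rightarrow> ('a \<Rightarrow> 'b::real_algebra_1) \<Rightarrow> ('a \<Rightarrow> real) \<Rightarrow> 'b" where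
  "ssum S c e = (\<Sum>i\<in>S. of_real (e i) * c i)"

lemma card_SV: "finite S \<Longrightarrow> card (SV S) = 2 ^ card S"
  by (simp add: SV_def card_PiE numeral_2_eq_2)

lemma finite_SV: "finite S \<Longrightarrow> finite (SV S)"
  by (simp add: SV_def finite_PiE)

lemma avgS_insert:
  assumes "finite S" "x \<notin> S"
  shows "avgS (insert x S) f = (avgS S (\<lambda>e. f (e(x := 1))) + avgS S (\<lambda>e. f (e(x := -1)))) / 2"
proof -
  have "(\<Sum>e\<in>SV (insert x S). f e) = (\<Sum>(y, g)\<in>{-1,1} \<times> SV S. f (g(x := y)))"
    unfolding SV_def PiE_insert_eq
    using sum.reindex[OF inj_combinator[OF assms(2), of "\<lambda>_. {-1::real,1}"], of f]
    by (simp add: o_def case_prod_unfold)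
  also have "\<dots> = (\<Sum>y\<in>{-1::real,1}. \<Sum>g\<in>SV S. f (g(x := y)))"
    by (rule sum.cartesian_product[symmetric])
  also have "\<dots> = (\<Sum>g\<in>SV S. f (g(x := 1))) + (\<Sum>g\<in>SV S. f (g(x := -1)))"
    by simp
  finally show ?thesis using assms unfolding avgS_def by (simp add: field_simps)
qed

lemma avgS_const: "finite S \<Longrightarrow> avgS S (\<lambda>_. c) = c"
  by (simp add: avgS_def card_SV)

lemma avgS_mono: "finite S \<Longrightarrow> (\<And>e. e \<in> SV S \<Longrightarrow> f e \<le> g e) \<Longrightarrow> avgS S f \<le> avgS S g"
  unfolding avgS_def by (intro divide_right_mono sum_mono) auto

lemma avgS_add: "avgS S (\<lambda>e. f e + g e) = avgS S f + avgS S g"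
  unfolding avgS_def by (simp add: sum.distrib add_divide_distrib)

lemma avgS_cmult: "avgS S (\<lambda>e. c * f e) = c * avgS S f"
  unfolding avgS_def by (simp add: sum_distrib_left)

lemma avgS_nonneg: "(\<And>e. e \<in> SV S \<Longrightarrow> 0 \<le> f e) \<Longrightarrow> 0 \<le> avgS S f"
  unfolding avgS_def by (intro divide_nonneg_pos sum_nonneg) auto

lemma avgS_half: "avgS S (\<lambda>e. (f e + g e) / 2) = (avgS S f + avgS S g) / 2"
  unfolding avgS_def by (simp add: sum.distrib sum_divide_distrib[symmetric] add_divide_distrib)

lemma ssum_upd:
  assumes "x \<notin> S" "finite S"
  shows "ssum (insert x S) c (e(x := y)) = of_real y * c x + ssum S c e"
proof -
  have "ssum S c (e(x := y)) = ssum S c e"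
    unfolding ssum_def using assms(1) by (intro sum.cong) auto
  then show ?thesis using assms unfolding ssum_def by simp
qed

lemma ssum_empty [simp]: "ssum {} c e = 0" by (simp add: ssum_def)

lemma avgS_second_moment:
  fixes c :: "'a \<Rightarrow> complex"
  assumes "finite S"
  shows "avgS S (\<lambda>e. (cmod (ssum S c e))\<^sup>2) = (\<Sum>i\<in>S. (cmod (c i))\<^sup>2)"
  using assms
proof (induction S rule: finite_induct)
  case empty then show ?case by (simp add: avgS_def SV_def)
next
  case (insert x S)
  have par: "((cmod (a + b))\<^sup>2 + (cmod (- a + b))\<^sup>2) / 2 = (cmod b)\<^sup>2 + (cmod a)\<^sup>2" for a b :: complex
    unfolding cmod_power2 by (simp add: power2_eq_square algebra_simps)
  have "avgS (insert x S) (\<lambda>e. (cmod (ssum (insert x S) c e))\<^sup>2)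
     = (avgS S (\<lambda>e. (cmod (of_real 1 * c x + ssum S c e))\<^sup>2) + avgS S (\<lambda>e. (cmod (of_real (-1) * c x + ssum S c e))\<^sup>2)) / 2"
    by (simp only: avgS_insert[OF insert.hyps] ssum_upd[OF insert.hyps(2,1)])
  also have "\<dots> = avgS S (\<lambda>e. ((cmod (c x + ssum S c e))\<^sup>2 + (cmod (- c x + ssum S c e))\<^sup>2) / 2)"
    by (simp only: avgS_half of_real_1 of_real_minus mult_1 mult_minus_left)
  also have "\<dots> = avgS S (\<lambda>e. (cmod (ssum S c e))\<^sup>2 + (cmod (c x))\<^sup>2)"
    by (simp only: par)
  also have "\<dots> = (\<Sum>i\<in>insert x S. (cmod (c i))\<^sup>2)"
    using insert by (simp add: avgS_add avgS_const)
  finally show ?case .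
qed

lemma avgS_exp_moment:
  fixes d :: "'a \<Rightarrow> real"
  assumes "finite S"
  shows "avgS S (\<lambda>e. exp (ssum S d e)) \<le> exp ((\<Sum>i\<in>S. (d i)\<^sup>2) / 2)"
  using assms
proof (induction S rule: finite_induct)
  case empty then show ?case by (simp add: avgS_def SV_def)
next
  case (insert x S)
  have pt: "(exp (1 * d x + Y) + exp ((-1) * d x + Y)) / 2 = cosh (d x) * exp Y" for Y
  proof -
    have "exp (1 * d x + Y) = exp (d x) * exp Y" by (simp add: exp_add)
    have "exp ((-1) * d x + Y) = exp (- d x) * exp Y" by (subst exp_add[symmetric]) simp
    then show ?thesis using \<open>exp (1 * d x + Y) = exp (d x) * exp Y\<close> by (simp add: cosh_field_def algebra_simps add_divide_distrib)
  qed
  have "avgS (insert x S) (\<lambda>e. exp (ssum (insert x S) d e))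
     = (avgS S (\<lambda>e. exp (of_real 1 * d x + ssum S d e)) + avgS S (\<lambda>e. exp (of_real (-1) * d x + ssum S d e))) / 2"
    by (simp only: avgS_insert[OF insert.hyps] ssum_upd[OF insert.hyps(2,1)])
  also have "\<dots> = avgS S (\<lambda>e. (exp (1 * d x + ssum S d e) + exp ((-1) * d x + ssum S d e)) / 2)"
    by (simp only: avgS_half of_real_1 of_real_minus)
  also have "\<dots> = avgS S (\<lambda>e. cosh (d x) * exp (ssum S d e))"
    by (simp only: pt)
  also have "\<dots> = cosh (d x) * avgS S (\<lambda>e. exp (ssum S d e))" by (rule avgS_cmult)
  also have "\<dots> \<le> exp ((d x)\<^sup>2 / 2) * exp ((\<Sum>i\<in>S. (d i)\<^sup>2) / 2)"
    by (intro mult_mono cosh_le_exp_sq insert.IH avgS_nonneg) (auto simp: cosh_def)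
  also have "\<dots> = exp ((\<Sum>i\<in>insert x S. (d i)\<^sup>2) / 2)"
    using insert by (simp add: exp_add[symmetric] add_divide_distrib)
  finally show ?case .
qed



lemma pow_le_fact_exp:
  fixes z :: real assumes "0 \<le> z"
  shows "z ^ n \<le> fact n * exp z"
proof -
  have s: "summable (\<lambda>k. z ^ k /\<^sub>R fact k)" using exp_converges[of z] by (rule sums_summable)
  have "sum (\<lambda>k. z ^ k /\<^sub>R fact k) {n} \<le> suminf (\<lambda>k. z ^ k /\<^sub>R fact k)"
    by (rule sum_le_suminf[OF s]) (use assms in auto)
  also have "\<dots> = exp z" using exp_converges[of z] by (simp add: sums_iff)
  finally have "z ^ n / fact n \<le> exp z" by (simp add: divide_inverse mult.commute)
  then show ?thesis by (simp add: divide_le_eq mult.commute)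
qed

lemma powr_le_exp_bound:
  fixes z p :: real assumes "0 \<le> z" "0 < p"
  shows "z powr p \<le> 1 + fact (nat \<lceil>p\<rceil>) * exp z"
proof (cases "z \<le> 1")
  case True
  then have "z powr p \<le> 1" using assms by (intro powr_le1) auto
  moreover have "0 \<le> fact (nat \<lceil>p\<rceil>) * exp z" by simp
  ultimately show ?thesis by linarith
next
  case False
  then have "z powr p \<le> z powr (real (nat \<lceil>p\<rceil>))"
    by (intro powr_mono) (auto simp: real_nat_ceiling_ge)
  also have "\<dots> = z ^ (nat \<lceil>p\<rceil>)" using False by (intro powr_realpow) auto
  also have "\<dots> \<le> fact (nat \<lceil>p\<rceil>) * exp z" using assms by (intro pow_le_fact_exp) auto
  finally show ?thesis by linarith
qed

lemma exp_abs_sum_le: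
  fixes r i :: real
  shows "exp (\<bar>r\<bar> + \<bar>i\<bar>) \<le> exp (r + i) + exp (r + - i) + exp (- r + i) + exp (- r + - i)"
proof -
  have p: "exp (r + i) > 0" "exp (r + - i) > 0" "exp (- r + i) > 0" "exp (- r + - i) > 0" by auto
  consider "0 \<le> r" "0 \<le> i" | "0 \<le> r" "i < 0" | "r < 0" "0 \<le> i" | "r < 0" "i < 0" by linarith
  then show ?thesis
  proof cases
    case 1 then have "\<bar>r\<bar> + \<bar>i\<bar> = r + i" by simp
    then show ?thesis using p by simp
  next
    case 2 then have "\<bar>r\<bar> + \<bar>i\<bar> = r + - i" by simp
    then show ?thesis using p by simp
  next
    case 3 then have "\<bar>r\<bar> + \<bar>i\<bar> = - r + i" by simp
    then show ?thesis using p by simp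
  next
    case 4 then have "\<bar>r\<bar> + \<bar>i\<bar> = - r + - i" by simp
    then show ?thesis using p by simp
  qed
qed

definition Bk :: "real \<Rightarrow> real" where
  "Bk p = 1 + fact (nat \<lceil>p\<rceil>) * (4 * exp 1)"

lemma Bk_pos: "Bk p > 0"
  unfolding Bk_def by (intro add_pos_nonneg) auto

lemma ssum_zero: "(\<And>i. i \<in> S \<Longrightarrow> c i = 0) \<Longrightarrow> ssum S c e = 0"
  unfolding ssum_def by (intro sum.neutral) auto

lemma Re_ssum: "Re (ssum S c e) = ssum S (\<lambda>i. Re (c i)) e"
  unfolding ssum_def by simp

lemma Im_ssum: "Im (ssum S c e) = ssum S (\<lambda>i. Im (c i)) e"
  unfolding ssum_def by simp

lemma ssum_lin: "(s1 * ssum S a e + s2 * ssum S b e) / q = ssum S (\<lambda>i. (s1 * a i + s2 * b i) / q) e"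
  for a b :: "'a \<Rightarrow> real"
  unfolding ssum_def by (simp add: sum_distrib_left sum.distrib sum_divide_distrib[symmetric] algebra_simps)

lemma khin_upper:
  fixes c :: "'a \<Rightarrow> complex" and p :: real
  assumes S: "finite S" and p: "0 < p"
  shows "avgS S (\<lambda>e. cmod (ssum S c e) powr p) \<le> Bk p * (\<Sum>i\<in>S. (cmod (c i))\<^sup>2) powr (p / 2)"
proof (cases "\<forall>i\<in>S. c i = 0")
  case True
  then have "avgS S (\<lambda>e. cmod (ssum S c e) powr p) = avgS S (\<lambda>e. 0)"
    by (simp add: ssum_zero)
  also have "\<dots> = 0" using S by (rule avgS_const)
  also have "0 \<le> Bk p * (\<Sum>i\<in>S. (cmod (c i))\<^sup>2) powr (p / 2)"
    using Bk_pos[of p] by simp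
  finally show ?thesis .
next
  case False
  define Q where "Q = (\<Sum>i\<in>S. (cmod (c i))\<^sup>2)"
  have Qpos: "Q > 0" unfolding Q_def using False S
    by (metis (no_types, lifting) norm_eq_zero sum_pos2 zero_less_power2 zero_le_power2)
  define \<sigma> where "\<sigma> = sqrt Q"
  have sp: "\<sigma> > 0" using Qpos by (simp add: \<sigma>_def)
  define dd where "dd = (\<lambda>s1 s2 i. (s1 * Re (c i) + s2 * Im (c i)) / \<sigma>)"
  define n where "n = nat \<lceil>p\<rceil>"
  have dd_sq: "(\<Sum>i\<in>S. (dd s1 s2 i)\<^sup>2) \<le> 2" if "\<bar>s1\<bar> = 1" "\<bar>s2\<bar> = 1" for s1 s2 :: real
  proof -
    have "(dd s1 s2 i)\<^sup>2 \<le> 2 * (cmod (c i))\<^sup>2 / Q" for i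
    proof -
      have s: "s1\<^sup>2 = 1" "s2\<^sup>2 = 1" using that by (metis power2_abs power_one)+
      have "(s1 * Re (c i) + s2 * Im (c i))\<^sup>2 \<le> 2 * ((Re (c i))\<^sup>2 + (Im (c i))\<^sup>2)"
      proof -
        have "0 \<le> (s1 * Re (c i) - s2 * Im (c i))\<^sup>2" by simp
        moreover have "(s1 * Re (c i) + s2 * Im (c i))\<^sup>2 + (s1 * Re (c i) - s2 * Im (c i))\<^sup>2
           = 2 * (s1\<^sup>2 * (Re (c i))\<^sup>2 + s2\<^sup>2 * (Im (c i))\<^sup>2)"
          by (simp add: power2_eq_square algebra_simps)
        ultimately show ?thesis unfolding s mult_1 by linarith
      qed
      also have "\<dots> = 2 * (cmod (c i))\<^sup>2" by (simp add: cmod_power2)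
      finally have "(s1 * Re (c i) + s2 * Im (c i))\<^sup>2 \<le> 2 * (cmod (c i))\<^sup>2" .
      moreover have "\<sigma>\<^sup>2 = Q" using Qpos by (simp add: \<sigma>_def)
      ultimately show ?thesis unfolding dd_def using Qpos
        by (simp add: power_divide divide_right_mono)
    qed
    then have "(\<Sum>i\<in>S. (dd s1 s2 i)\<^sup>2) \<le> (\<Sum>i\<in>S. 2 * (cmod (c i))\<^sup>2 / Q)"
      by (intro sum_mono) auto
    also have "\<dots> = 2" using Qpos unfolding Q_def
      by (simp add: sum_divide_distrib[symmetric] sum_distrib_left[symmetric])
    finally show ?thesis .
  qed
  have ex: "avgS S (\<lambda>e. exp (ssum S (dd s1 s2) e)) \<le> exp 1" if "\<bar>s1\<bar> = 1" "\<bar>s2\<bar> = 1" for s1 s2 :: real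
  proof -
    have "avgS S (\<lambda>e. exp (ssum S (dd s1 s2) e)) \<le> exp ((\<Sum>i\<in>S. (dd s1 s2 i)\<^sup>2) / 2)"
      by (rule avgS_exp_moment[OF S])
    also have "\<dots> \<le> exp 1" using dd_sq[OF that] by simp
    finally show ?thesis .
  qed
  have pt: "cmod (ssum S c e) powr p \<le> \<sigma> powr p * (1 + fact n *
      (exp (ssum S (dd 1 1) e) + exp (ssum S (dd 1 (-1)) e) + exp (ssum S (dd (-1) 1) e) + exp (ssum S (dd (-1) (-1)) e)))"
    for e
  proof -
    define r where "r = Re (ssum S c e) / \<sigma>"
    define i where "i = Im (ssum S c e) / \<sigma>"
    have rr: "ssum S (dd s1 s2) e = s1 * r + s2 * i" for s1 s2
      unfolding r_def i_def dd_def Re_ssum Im_ssum using ssum_lin[of s1 S "\<lambda>i. Re (c i)" e s2 "\<lambda>i. Im (c i)" \<sigma>]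
      by (simp add: add_divide_distrib)
    have "cmod (ssum S c e) = \<sigma> * (cmod (ssum S c e) / \<sigma>)" using sp by simp
    have "cmod (ssum S c e) / \<sigma> \<le> \<bar>r\<bar> + \<bar>i\<bar>"
      using cmod_le[of "ssum S c e"] sp unfolding r_def i_def
      by (simp add: divide_right_mono add_divide_distrib[symmetric])
    then have "(cmod (ssum S c e) / \<sigma>) powr p \<le> (\<bar>r\<bar> + \<bar>i\<bar>) powr p"
      using p sp by (intro powr_mono2) auto
    also have "\<dots> \<le> 1 + fact n * exp (\<bar>r\<bar> + \<bar>i\<bar>)"
      unfolding n_def using p by (intro powr_le_exp_bound) auto
    also have "\<dots> \<le> 1 + fact n * (exp (r + i) + exp (r + - i) + exp (- r + i) + exp (- r + - i))"
      by (intro add_left_mono mult_left_mono exp_abs_sum_le) auto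
    also have "\<dots> = 1 + fact n *
      (exp (ssum S (dd 1 1) e) + exp (ssum S (dd 1 (-1)) e) + exp (ssum S (dd (-1) 1) e) + exp (ssum S (dd (-1) (-1)) e))"
      by (simp add: rr)
    finally have *: "(cmod (ssum S c e) / \<sigma>) powr p \<le> \<dots>" .
    have "cmod (ssum S c e) powr p = \<sigma> powr p * (cmod (ssum S c e) / \<sigma>) powr p"
      using sp by (simp add: powr_divide)
    also have "\<dots> \<le> \<sigma> powr p * (1 + fact n *
      (exp (ssum S (dd 1 1) e) + exp (ssum S (dd 1 (-1)) e) + exp (ssum S (dd (-1) 1) e) + exp (ssum S (dd (-1) (-1)) e)))"
      by (intro mult_left_mono *) auto
    finally show ?thesis .
  qed
  have "avgS S (\<lambda>e. cmod (ssum S c e) powr p) \<le> avgS S (\<lambda>e. \<sigma> powr p * (1 + fact n *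
      (exp (ssum S (dd 1 1) e) + exp (ssum S (dd 1 (-1)) e) + exp (ssum S (dd (-1) 1) e) + exp (ssum S (dd (-1) (-1)) e))))"
    by (rule avgS_mono[OF S pt])
  also have "\<dots> = \<sigma> powr p * (1 + fact n *
      (avgS S (\<lambda>e. exp (ssum S (dd 1 1) e)) + avgS S (\<lambda>e. exp (ssum S (dd 1 (-1)) e)) +
       avgS S (\<lambda>e. exp (ssum S (dd (-1) 1) e)) + avgS S (\<lambda>e. exp (ssum S (dd (-1) (-1)) e))))"
    by (simp only: avgS_cmult avgS_add avgS_const[OF S])
  also have "\<dots> \<le> \<sigma> powr p * (1 + fact n * (exp 1 + exp 1 + exp 1 + exp 1))"
    by (intro mult_left_mono add_left_mono add_mono ex) auto
  also have "\<dots> = Bk p * Q powr (p / 2)"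
  proof -
    have "\<sigma> powr p = Q powr (p / 2)"
      unfolding \<sigma>_def using Qpos by (simp add: powr_half_sqrt[symmetric] powr_powr)
    then show ?thesis unfolding Bk_def n_def by (simp add: algebra_simps)
  qed
  finally show ?thesis unfolding Q_def .
qed



lemma convex_powr0:
  assumes q: "1 \<le> q"
  shows "convex_on {0..} (\<lambda>x::real. x powr q)"
proof (rule convex_onI)
  fix t x y :: real
  assume t: "0 < t" "t < 1" and x: "x \<in> {0..}" and y: "y \<in> {0..}"
  have q0: "q \<noteq> 0" using q by auto
  show "((1 - t) *\<^sub>R x + t *\<^sub>R y) powr q \<le> (1 - t) * x powr q + t * y powr q"
  proof (cases "x = 0 \<or> y = 0")
    case False
    then have "x \<in> {0<..}" "y \<in> {0<..}" using x y by auto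
    then show ?thesis using convex_onD[OF powr_convex[OF q], of t x y] t by simp
  next
    case True
    then show ?thesis
    proof
      assume x0: "x = 0"
      have "(t * y) powr q = t powr q * y powr q" using t y by (simp add: powr_mult)
      also have "\<dots> \<le> t * y powr q" using t q by (intro mult_right_mono powr_le_one_le) auto
      finally show ?thesis using x0 q0 by simp
    next
      assume y0: "y = 0"
      have "((1 - t) * x) powr q = (1 - t) powr q * x powr q" using t x by (simp add: powr_mult)
      also have "\<dots> \<le> (1 - t) * x powr q" using t q by (intro mult_right_mono powr_le_one_le) auto
      finally show ?thesis using y0 q0 by simp
    qed
  qed
qed simp

lemma avgS_jensen:
  assumes S: "finite S" and cv: "convex_on {0..} \<phi>" and X: "\<And>e. 0 \<le> X e"
  shows "\<phi> (avgS S X) \<le> avgS S (\<lambda>e. \<phi> (X e))"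
proof -
  have fin: "finite (SV S)" using S by (rule finite_SV)
  have card: "card (SV S) = 2 ^ card S" using S by (rule card_SV)
  then have ne: "SV S \<noteq> {}" using fin by auto
  have sum1: "(\<Sum>e\<in>SV S. 1 / 2 ^ card S) = (1::real)" using card by simp
  have "\<phi> (\<Sum>e\<in>SV S. (1 / 2 ^ card S) *\<^sub>R X e) \<le> (\<Sum>e\<in>SV S. (1 / 2 ^ card S) * \<phi> (X e))"
    by (rule convex_on_sum[OF fin ne cv sum1]) (auto simp: X)
  moreover have "(\<Sum>e\<in>SV S. (1 / 2 ^ card S) *\<^sub>R X e) = avgS S X"
    unfolding avgS_def by (simp add: sum_divide_distrib)
  moreover have "(\<Sum>e\<in>SV S. (1 / 2 ^ card S) * \<phi> (X e)) = avgS S (\<lambda>e. \<phi> (X e))"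
    unfolding avgS_def by (simp add: sum_divide_distrib)
  ultimately show ?thesis by simp
qed

lemma sq_powr_half:
  fixes x p :: real assumes "0 \<le> x"
  shows "(x\<^sup>2) powr (p / 2) = x powr p"
proof -
  have "x\<^sup>2 = x powr 2"
  proof (cases "x = 0")
    case False then show ?thesis using assms by (simp add: powr_numeral)
  qed simp
  then show ?thesis by (simp add: powr_powr)
qed

lemma khin_lower:
  fixes c :: "'a \<Rightarrow> complex" and p :: real
  assumes S: "finite S" and p: "2 \<le> p"
  shows "(\<Sum>i\<in>S. (cmod (c i))\<^sup>2) powr (p / 2) \<le> avgS S (\<lambda>e. cmod (ssum S c e) powr p)"
proof -
  have "(\<Sum>i\<in>S. (cmod (c i))\<^sup>2) powr (p / 2) = (avgS S (\<lambda>e. (cmod (ssum S c e))\<^sup>2)) powr (p / 2)"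
    using avgS_second_moment[OF S, of c] by simp
  also have "\<dots> \<le> avgS S (\<lambda>e. ((cmod (ssum S c e))\<^sup>2) powr (p / 2))"
    by (rule avgS_jensen[OF S convex_powr0]) (use p in auto)
  also have "\<dots> = avgS S (\<lambda>e. cmod (ssum S c e) powr p)"
    by (simp add: sq_powr_half)
  finally show ?thesis .
qed



lemma Lp_norm_powr:
  assumes "0 < p"
  shows "Lp_norm p f powr p = (\<integral>x. cmod (f x) powr p \<partial>lebesgue)"
proof -
  have "0 \<le> (\<integral>x. cmod (f x) powr p \<partial>lebesgue)" by (rule Bochner_Integration.integral_nonneg) auto
  then show ?thesis unfolding Lp_norm_def using assms by (simp add: powr_powr)
qed

lemma Lp_norm_nonneg: "0 \<le> Lp_norm p f"
  unfolding Lp_norm_def by simp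

lemma Lp_norm_zero: "0 < p \<Longrightarrow> Lp_norm p (\<lambda>x. 0) = 0"
  unfolding Lp_norm_def by simp

lemma cmod_add_powr_le:
  fixes a b :: complex and p :: real assumes "0 < p"
  shows "cmod (a + b) powr p \<le> 2 powr p * (cmod a powr p + cmod b powr p)"
proof -
  have "cmod (a + b) \<le> 2 * max (cmod a) (cmod b)"
    using norm_triangle_ineq[of a b] by linarith
  then have "cmod (a + b) powr p \<le> (2 * max (cmod a) (cmod b)) powr p"
    using assms by (intro powr_mono2) auto
  also have "\<dots> = 2 powr p * max (cmod a) (cmod b) powr p" by (simp add: powr_mult)
  also have "\<dots> \<le> 2 powr p * (cmod a powr p + cmod b powr p)"
    by (intro mult_left_mono) (auto simp: max_def)
  finally show ?thesis .
qed

lemma memLp_add: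
  assumes p: "0 < p" and f: "memLp p f" and g: "memLp p g"
  shows "memLp p (\<lambda>x. f x + g x)"
proof -
  have fm[measurable]: "f \<in> borel_measurable lebesgue" and gm[measurable]: "g \<in> borel_measurable lebesgue"
    using f g by (auto simp: memLp_def)
  have fi: "integrable lebesgue (\<lambda>x. cmod (f x) powr p)" and gi: "integrable lebesgue (\<lambda>x. cmod (g x) powr p)"
    using f g by (auto simp: memLp_def)
  have "integrable lebesgue (\<lambda>x. cmod (f x + g x) powr p)"
  proof (rule Bochner_Integration.integrable_bound)
    show "integrable lebesgue (\<lambda>x. 2 powr p * (cmod (f x) powr p + cmod (g x) powr p))"
      using fi gi by auto
    show "(\<lambda>x. cmod (f x + g x) powr p) \<in> borel_measurable lebesgue" by measurable
    show "AE x in lebesgue. norm (cmod (f x + g x) powr p) \<le> norm (2 powr p * (cmod (f x) powr p + cmod (g x) powr p))"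
      using cmod_add_powr_le[OF p] by (auto intro!: AE_I2)
  qed
  then show ?thesis unfolding memLp_def by auto
qed

lemma memLp_cmult:
  assumes p: "0 < p" and f: "memLp p f"
  shows "memLp p (\<lambda>x. c * f x)"
proof -
  have fm[measurable]: "f \<in> borel_measurable lebesgue" using f by (auto simp: memLp_def)
  have fi: "integrable lebesgue (\<lambda>x. cmod (f x) powr p)" using f by (auto simp: memLp_def)
  have "integrable lebesgue (\<lambda>x. cmod c powr p * cmod (f x) powr p)" using fi by auto
  then have "integrable lebesgue (\<lambda>x. cmod (c * f x) powr p)" by (simp add: norm_mult powr_mult)
  then show ?thesis unfolding memLp_def by auto
qed

lemma memLp_zero: "0 < p \<Longrightarrow> memLp p (\<lambda>x. 0)"
  unfolding memLp_def by simp

lemma memLp_sum: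
  assumes p: "0 < p" and F: "finite F" and u: "\<And>i. i \<in> F \<Longrightarrow> memLp p (u i)"
  shows "memLp p (\<lambda>x. \<Sum>i\<in>F. u i x)"
  using F u
proof (induction F rule: finite_induct)
  case empty then show ?case using memLp_zero[OF p] by simp
next
  case (insert i F)
  then show ?case using memLp_add[OF p, of "u i" "\<lambda>x. \<Sum>i\<in>F. u i x"] by simp
qed

lemma memLp_diff:
  assumes p: "0 < p" and f: "memLp p f" and g: "memLp p g"
  shows "memLp p (\<lambda>x. f x - g x)"
  using memLp_add[OF p f memLp_cmult[OF p g, of "-1"]] by simp

lemma transl_measurable: "(\<lambda>x::real. x - t) \<in> lebesgue \<rightarrow>\<^sub>M lebesgue"
  using lebesgue_affine_measurable[where c= "\<lambda>x::real. 1" and t = "-t"] by simp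

lemma integral_transl:
  fixes f :: "real \<Rightarrow> real"
  shows "(\<integral>x. f (x - t) \<partial>lebesgue) = (\<integral>x. f x \<partial>lebesgue)"
  using lebesgue_integral_real_affine[of 1 f "-t"] by simp

lemma integrable_transl:
  fixes f :: "real \<Rightarrow> real"
  shows "integrable lebesgue (\<lambda>x. f (x - t)) \<longleftrightarrow> integrable lebesgue f"
  using lebesgue_integrable_real_affine_iff[of 1 f "-t"] by simp

lemma memLp_transl:
  assumes g: "memLp p g"
  shows "memLp p (\<lambda>x. g (x - t))"
proof -
  have "g \<in> borel_measurable lebesgue" using g by (auto simp: memLp_def)
  then have "(\<lambda>x. g (x - t)) \<in> borel_measurable lebesgue"
    using measurable_compose[OF transl_measurable] by (auto simp: o_def)
  moreover have "integrable lebesgue (\<lambda>x. cmod (g (x - t)) powr p)"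
    using g integrable_transl[of "\<lambda>x. cmod (g x) powr p" t] by (auto simp: memLp_def)
  ultimately show ?thesis unfolding memLp_def by auto
qed

lemma cmod_gabor_atom: "cmod (gabor_atom g ts x) = cmod (g (x - fst ts))"
  unfolding gabor_atom_def modul_def transl_def by (simp add: norm_mult norm_exp_eq_Re)



lemma jensen_int:
  assumes p: "2 \<le> p" and S: "finite S" "S \<noteq> {}" and wt: "\<And>i. i \<in> S \<Longrightarrow> 0 \<le> wt i"
    and A: "A = (\<Sum>i\<in>S. wt i)" "0 < A"
    and h: "\<And>i. i \<in> S \<Longrightarrow> memLp p (h i)"
    and M: "\<And>i. i \<in> S \<Longrightarrow> (\<integral>x. cmod (h i x) powr p \<partial>lebesgue) \<le> M"
  shows "integrable lebesgue (\<lambda>x. (\<Sum>i\<in>S. wt i * (cmod (h i x))\<^sup>2) powr (p / 2))"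
    and "(\<integral>x. (\<Sum>i\<in>S. wt i * (cmod (h i x))\<^sup>2) powr (p / 2) \<partial>lebesgue) \<le> A powr (p / 2) * M"
proof -
  have hm: "\<And>i. i \<in> S \<Longrightarrow> h i \<in> borel_measurable lebesgue" using h by (auto simp: memLp_def)
  have hi: "\<And>i. i \<in> S \<Longrightarrow> integrable lebesgue (\<lambda>x. cmod (h i x) powr p)" using h by (auto simp: memLp_def)
  define R where "R = (\<lambda>x. A powr (p / 2) * (\<Sum>i\<in>S. (wt i / A) * cmod (h i x) powr p))"
  have Ri: "integrable lebesgue R" unfolding R_def using hi by auto
  have sumw: "(\<Sum>i\<in>S. wt i / A) = 1" using A by (simp add: sum_divide_distrib[symmetric])
  have pt: "(\<Sum>i\<in>S. wt i * (cmod (h i x))\<^sup>2) powr (p / 2) \<le> R x" for x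
  proof -
    have "(\<Sum>i\<in>S. wt i * (cmod (h i x))\<^sup>2) = A * (\<Sum>i\<in>S. (wt i / A) *\<^sub>R (cmod (h i x))\<^sup>2)"
      using A by (simp add: sum_distrib_left)
    then have "(\<Sum>i\<in>S. wt i * (cmod (h i x))\<^sup>2) powr (p / 2)
        = A powr (p / 2) * (\<Sum>i\<in>S. (wt i / A) *\<^sub>R (cmod (h i x))\<^sup>2) powr (p / 2)"
      using A wt by (simp add: powr_mult sum_nonneg)
    also have "\<dots> \<le> A powr (p / 2) * (\<Sum>i\<in>S. (wt i / A) * ((cmod (h i x))\<^sup>2) powr (p / 2))"
      by (intro mult_left_mono convex_on_sum[OF S convex_powr0 sumw]) (use p A wt in auto)
    also have "\<dots> = R x" unfolding R_def by (simp add: sq_powr_half)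
    finally show ?thesis .
  qed
  have hn: "\<And>i. i \<in> S \<Longrightarrow> (\<lambda>x. cmod (h i x)) \<in> borel_measurable lebesgue"
    using hm by (auto intro: measurable_compose[OF _ borel_measurable_norm])
  have meas: "(\<lambda>x. (\<Sum>i\<in>S. wt i * (cmod (h i x))\<^sup>2) powr (p / 2)) \<in> borel_measurable lebesgue"
    by (intro powr_real_measurable borel_measurable_sum borel_measurable_times borel_measurable_const
        borel_measurable_power hn) auto
  show int: "integrable lebesgue (\<lambda>x. (\<Sum>i\<in>S. wt i * (cmod (h i x))\<^sup>2) powr (p / 2))"
    by (rule Bochner_Integration.integrable_bound[OF Ri meas]) (auto intro!: AE_I2 pt order.trans[OF _ abs_ge_self])
  have "(\<integral>x. (\<Sum>i\<in>S. wt i * (cmod (h i x))\<^sup>2) powr (p / 2) \<partial>lebesgue) \<le> (\<integral>x. R x \<partial>lebesgue)"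
    by (rule integral_mono[OF int Ri pt])
  also have "\<dots> = A powr (p / 2) * (\<Sum>i\<in>S. (wt i / A) * (\<integral>x. cmod (h i x) powr p \<partial>lebesgue))"
    unfolding R_def using hi by (simp add: integral_sum)
  also have "\<dots> \<le> A powr (p / 2) * (\<Sum>i\<in>S. (wt i / A) * M)"
    using A wt M by (intro mult_left_mono sum_mono mult_left_mono) auto
  also have "\<dots> = A powr (p / 2) * ((\<Sum>i\<in>S. wt i / A) * M)" by (simp only: sum_distrib_right)
  also have "\<dots> = A powr (p / 2) * M" by (simp only: sumw mult_1)
  finally show "(\<integral>x. (\<Sum>i\<in>S. wt i * (cmod (h i x))\<^sup>2) powr (p / 2) \<partial>lebesgue) \<le> A powr (p / 2) * M" .
qed



lemma sum_powr_convex: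
  fixes u v p :: real assumes "0 \<le> u" "0 \<le> v" "1 \<le> p"
  shows "(u + v) powr p \<le> 2 powr (p - 1) * (u powr p + v powr p)"
proof -
  have "((1 - 1/2) *\<^sub>R u + (1/2) *\<^sub>R v) powr p \<le> (1 - 1/2) * u powr p + (1/2) * v powr p"
    using convex_onD[OF convex_powr0[OF assms(3)], of "1/2" u v] assms by simp
  then have "((u + v) / 2) powr p \<le> (u powr p + v powr p) / 2" by (simp add: field_simps)
  then have "(u + v) powr p / 2 powr p \<le> (u powr p + v powr p) / 2" using assms by (simp add: powr_divide)
  then have "(u + v) powr p \<le> 2 powr p * ((u powr p + v powr p) / 2)" by (simp add: divide_le_eq mult.commute)
  also have "2 powr p * ((u powr p + v powr p) / 2) = 2 powr (p - 1) * (u powr p + v powr p)"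
    by (simp add: powr_diff)
  finally show ?thesis .
qed

lemma L2_sq: "L2_set f S powr p = (\<Sum>i\<in>S. (f i)\<^sup>2) powr (p / 2)"
  unfolding L2_set_def by (simp add: powr_half_sqrt[symmetric] sum_nonneg powr_powr)

lemma lower_Q:
  fixes g :: "real \<Rightarrow> complex"
  assumes p: "2 \<le> p" and S: "finite S" "S \<noteq> {}" and wt: "\<And>i. i \<in> S \<Longrightarrow> 0 \<le> wt i"
    and A: "A = (\<Sum>i\<in>S. wt i)" "0 < A"
    and g: "memLp p g" and g1: "(\<integral>x. cmod (g x) powr p \<partial>lebesgue) = 1"
    and close: "\<And>i. i \<in> S \<Longrightarrow> (\<integral>x. cmod (g (x - tt i) - g (x - t0)) powr p \<partial>lebesgue) \<le> (1/2) powr p"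
  shows "A powr (p / 2) / 2 powr p \<le> (\<integral>x. (\<Sum>i\<in>S. wt i * (cmod (g (x - tt i)))\<^sup>2) powr (p / 2) \<partial>lebesgue)"
proof -
  have p0: "0 < p" using p by simp
  define Gp where "Gp = (\<lambda>x. (\<Sum>i\<in>S. wt i * (cmod (g (x - tt i)))\<^sup>2) powr (p / 2))"
  define Dp where "Dp = (\<lambda>x. (\<Sum>i\<in>S. wt i * (cmod (g (x - tt i) - g (x - t0)))\<^sup>2) powr (p / 2))"
  define G0p where "G0p = (\<lambda>x. A powr (p / 2) * cmod (g (x - t0)) powr p)"
  have gt: "memLp p (\<lambda>x. g (x - s))" for s using g by (rule memLp_transl)
  have gti: "(\<integral>x. cmod (g (x - s)) powr p \<partial>lebesgue) = 1" for s
    using integral_transl[of "\<lambda>x. cmod (g x) powr p" s] g1 by simp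
  have JG: "integrable lebesgue Gp" "(\<integral>x. Gp x \<partial>lebesgue) \<le> A powr (p / 2) * 1"
    unfolding Gp_def using jensen_int[OF p S wt A, of "\<lambda>i x. g (x - tt i)" 1] gt gti by auto
  have JD: "integrable lebesgue Dp" "(\<integral>x. Dp x \<partial>lebesgue) \<le> A powr (p / 2) * (1/2) powr p"
    unfolding Dp_def using jensen_int[OF p S wt A, of "\<lambda>i x. g (x - tt i) - g (x - t0)" "(1/2) powr p"]
      memLp_diff[OF p0 gt gt] close by auto
  have G0i: "integrable lebesgue G0p" unfolding G0p_def using gt[of t0] by (auto simp: memLp_def)
  have G0int: "(\<integral>x. G0p x \<partial>lebesgue) = A powr (p / 2)" unfolding G0p_def using gti[of t0] by simp
  have pt: "G0p x \<le> 2 powr (p - 1) * (Gp x + Dp x)" for x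
  proof -
    define sw where "sw = (\<lambda>i. sqrt (wt i))"
    have sw2: "(sw i * y)\<^sup>2 = wt i * y\<^sup>2" if "i \<in> S" for i y
      using wt[OF that] by (simp add: sw_def power_mult_distrib)
    define G0 where "G0 = L2_set (\<lambda>i. sw i * cmod (g (x - t0))) S"
    define G where "G = L2_set (\<lambda>i. sw i * cmod (g (x - tt i))) S"
    define D where "D = L2_set (\<lambda>i. sw i * cmod (g (x - tt i) - g (x - t0))) S"
    have "G0 \<le> L2_set (\<lambda>i. sw i * cmod (g (x - tt i)) + sw i * cmod (g (x - tt i) - g (x - t0))) S"
      unfolding G0_def
    proof (rule L2_set_mono)
      fix i assume "i \<in> S"
      have "cmod (g (x - t0)) \<le> cmod (g (x - tt i)) + cmod (g (x - tt i) - g (x - t0))"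
        using norm_triangle_ineq4[of "g (x - tt i)" "g (x - tt i) - g (x - t0)"] by simp
      then show "sw i * cmod (g (x - t0)) \<le> sw i * cmod (g (x - tt i)) + sw i * cmod (g (x - tt i) - g (x - t0))"
        unfolding distrib_left[symmetric] using wt[OF \<open>i \<in> S\<close>] by (intro mult_left_mono) (auto simp: sw_def)
      show "0 \<le> sw i * cmod (g (x - t0))" using wt[OF \<open>i \<in> S\<close>] by (simp add: sw_def)
    qed
    also have "\<dots> \<le> G + D" unfolding G_def D_def by (rule L2_set_triangle_ineq)
    finally have GD: "G0 \<le> G + D" .
    have "G0 powr p \<le> (G + D) powr p" using GD p0 by (intro powr_mono2) (auto simp: G0_def)
    also have "\<dots> \<le> 2 powr (p - 1) * (G powr p + D powr p)"
      using p by (intro sum_powr_convex) (auto simp: G_def D_def)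
    finally have *: "G0 powr p \<le> 2 powr (p - 1) * (G powr p + D powr p)" .
    have "G powr p = Gp x" unfolding G_def Gp_def L2_sq by (intro arg_cong2[where f="(powr)"] sum.cong) (auto simp: sw2)
    moreover have "D powr p = Dp x" unfolding D_def Dp_def L2_sq by (intro arg_cong2[where f="(powr)"] sum.cong) (auto simp: sw2)
    moreover have "G0 powr p = G0p x"
    proof -
      have "G0 powr p = (\<Sum>i\<in>S. wt i * (cmod (g (x - t0)))\<^sup>2) powr (p / 2)"
        unfolding G0_def L2_sq by (intro arg_cong2[where f="(powr)"] sum.cong) (auto simp: sw2)
      also have "\<dots> = (A * (cmod (g (x - t0)))\<^sup>2) powr (p / 2)" by (simp add: A sum_distrib_right)
      also have "\<dots> = G0p x" unfolding G0p_def using A by (simp add: powr_mult sq_powr_half)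
      finally show ?thesis .
    qed
    ultimately show ?thesis using * by simp
  qed
  have "A powr (p / 2) \<le> (\<integral>x. 2 powr (p - 1) * (Gp x + Dp x) \<partial>lebesgue)"
    unfolding G0int[symmetric] by (rule integral_mono[OF G0i _ pt]) (use JG JD in auto)
  also have "\<dots> = 2 powr (p - 1) * ((\<integral>x. Gp x \<partial>lebesgue) + (\<integral>x. Dp x \<partial>lebesgue))"
    using JG JD by simp
  also have "\<dots> \<le> 2 powr (p - 1) * ((\<integral>x. Gp x \<partial>lebesgue) + A powr (p / 2) * (1/2) powr p)"
    using JD by (intro mult_left_mono add_left_mono) auto
  finally have *: "A powr (p / 2) \<le> 2 powr (p - 1) * (\<integral>x. Gp x \<partial>lebesgue) + 2 powr (p - 1) * (A powr (p / 2) * (1/2) powr p)"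
    by (simp add: distrib_left)
  have h: "2 powr (p - 1) * (1/2) powr p = 1/2" by (simp add: powr_diff powr_divide)
  have "2 powr (p - 1) * (A powr (p / 2) * (1/2) powr p) = A powr (p / 2) / 2"
    using h by (simp add: algebra_simps)
  with * have "A powr (p / 2) / 2 \<le> 2 powr (p - 1) * (\<integral>x. Gp x \<partial>lebesgue)" by simp
  then have "A powr (p / 2) / 2 / 2 powr (p - 1) \<le> (\<integral>x. Gp x \<partial>lebesgue)"
    by (simp add: divide_le_eq mult.commute)
  moreover have "A powr (p / 2) / 2 / 2 powr (p - 1) = A powr (p / 2) / 2 powr p"
  proof -
    have "2 * 2 powr (p - 1) = (2::real) powr p" by (simp add: powr_diff)
    then show ?thesis by (simp add: divide_divide_eq_left)
  qed
  ultimately have "A powr (p / 2) / 2 powr p \<le> (\<integral>x. Gp x \<partial>lebesgue)" by linarith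
  then show ?thesis unfolding Gp_def .
qed



lemma powr_le_cancel_base:
  fixes x y p :: real assumes "0 \<le> x" "0 \<le> y" "0 < p" "x powr p \<le> y powr p"
  shows "x \<le> y"
proof (rule ccontr)
  assume "\<not> x \<le> y"
  then have "y powr p < x powr p" using assms by (intro powr_less_mono2) auto
  then show False using assms by simp
qed

lemma sqrt_powr: "0 \<le> A \<Longrightarrow> sqrt A powr p = A powr (p / 2)"
  by (simp add: powr_half_sqrt[symmetric] powr_powr)

lemma main_bound:
  fixes g :: "real \<Rightarrow> complex" and a :: "real \<times> real \<Rightarrow> complex"
  assumes p: "2 \<le> p"
    and g: "memLp p g" "Lp_norm p g = 1"
    and unc: "K_unconditional_basic p K (gabor_atom g) \<Lambda>"
    and close: "\<And>\<tau>. 0 < \<tau> \<Longrightarrow> \<tau> < \<delta> \<Longrightarrow> Lp_norm p (\<lambda>x. transl \<tau> g x - g x) \<le> 1/2"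
    and S: "finite S" "S \<subseteq> \<Lambda>" "\<And>ts. ts \<in> S \<Longrightarrow> t0 \<le> fst ts \<and> fst ts < t0 + \<delta>"
      "\<And>ts. ts \<in> S \<Longrightarrow> a ts \<noteq> 0"
  shows "1 / (2 * max K 1) * sqrt (\<Sum>ts\<in>S. (cmod (a ts))\<^sup>2) \<le> Lp_norm p (\<lambda>x. \<Sum>ts\<in>S. a ts * gabor_atom g ts x)
     \<and> Lp_norm p (\<lambda>x. \<Sum>ts\<in>S. a ts * gabor_atom g ts x) \<le> max K 1 * Bk p powr (1 / p) * sqrt (\<Sum>ts\<in>S. (cmod (a ts))\<^sup>2)"
proof (cases "S = {}")
  case True
  then show ?thesis using p by (simp add: Lp_norm_zero)
next
  case Sne: False
  have p0: "0 < p" using p by simp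
  define M where "M = max K 1"
  have M1: "1 \<le> M" "0 < M" "K \<le> M" unfolding M_def by auto
  define u where "u = gabor_atom g"
  have bs: "basic_sequence p u \<Lambda>" and ub: "\<And>F a \<theta>. finite F \<Longrightarrow> F \<subseteq> \<Lambda> \<Longrightarrow> (\<forall>i. cmod (\<theta> i) \<le> 1) \<Longrightarrow>
        Lp_norm p (\<lambda>x. \<Sum>i\<in>F. \<theta> i * a i * u i x) \<le> K * Lp_norm p (\<lambda>x. \<Sum>i\<in>F. a i * u i x)"
    using unc unfolding K_unconditional_basic_def u_def by blast+
  have atoms: "\<And>ts. ts \<in> \<Lambda> \<Longrightarrow> memLp p (u ts)" using bs unfolding basic_sequence_def by blast
  define wt where "wt = (\<lambda>ts. (cmod (a ts))\<^sup>2)"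
  define A where "A = (\<Sum>ts\<in>S. wt ts)"
  have wt0: "\<And>ts. ts \<in> S \<Longrightarrow> 0 \<le> wt ts" unfolding wt_def by simp
  have Apos: "0 < A" unfolding A_def wt_def using S(1,4) Sne
    by (metis (no_types, lifting) all_not_in_conv norm_eq_zero sum_pos2 zero_le_power2 zero_less_power2)
  define \<theta> where "\<theta> = (\<lambda>e ts. complex_of_real (if ts \<in> S then e ts else 1))"
  define Fe where "Fe = (\<lambda>e x. \<Sum>ts\<in>S. \<theta> e ts * a ts * u ts x)"
  define cx where "cx = (\<lambda>x ts. a ts * u ts x)"
  have Fe_ssum: "Fe e x = ssum S (cx x) e" for e x
    unfolding Fe_def ssum_def cx_def \<theta>_def by (intro sum.cong) auto
  have cmod_cx: "(cmod (cx x ts))\<^sup>2 = wt ts * (cmod (g (x - fst ts)))\<^sup>2" for x ts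
    unfolding cx_def wt_def u_def by (simp add: norm_mult cmod_gabor_atom power_mult_distrib)
  have Q_eq: "(\<Sum>ts\<in>S. (cmod (cx x ts))\<^sup>2) = (\<Sum>ts\<in>S. wt ts * (cmod (g (x - fst ts)))\<^sup>2)" for x
    by (simp add: cmod_cx)
  have eS: "e ts = 1 \<or> e ts = -1" if "e \<in> SV S" "ts \<in> S" for e ts
    using that unfolding SV_def by (auto simp: PiE_iff)
  have \<theta>b: "cmod (\<theta> e ts) \<le> 1" if "e \<in> SV S" for e ts
    using eS[OF that, of ts] unfolding \<theta>_def by (cases "ts \<in> S") auto
  have \<theta>sq: "\<theta> e ts * \<theta> e ts = 1" if "e \<in> SV S" for e ts
    using eS[OF that, of ts] unfolding \<theta>_def by (cases "ts \<in> S") auto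
  have memFe: "memLp p (Fe e)" for e
    unfolding Fe_def
    by (rule memLp_sum[OF p0 S(1)], rule memLp_cmult[OF p0], rule atoms) (use S(2) in auto)
  define N where "N = Lp_norm p (\<lambda>x. \<Sum>ts\<in>S. a ts * u ts x)"
  have N0: "0 \<le> N" unfolding N_def by (rule Lp_norm_nonneg)
  define Ie where "Ie = (\<lambda>e. \<integral>x. cmod (Fe e x) powr p \<partial>lebesgue)"
  have NeIe: "Lp_norm p (Fe e) powr p = Ie e" for e unfolding Ie_def by (rule Lp_norm_powr[OF p0])
  have Iei: "integrable lebesgue (\<lambda>x. cmod (Fe e x) powr p)" for e using memFe[of e] by (simp add: memLp_def)
  have unc1: "Lp_norm p (Fe e) \<le> K * N" if "e \<in> SV S" for e
    unfolding Fe_def N_def by (rule ub[OF S(1,2)]) (use \<theta>b[OF that] in auto)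
  have unc2: "N \<le> K * Lp_norm p (Fe e)" if "e \<in> SV S" for e
  proof -
    have "Lp_norm p (\<lambda>x. \<Sum>i\<in>S. \<theta> e i * (\<theta> e i * a i) * u i x) \<le> K * Lp_norm p (\<lambda>x. \<Sum>i\<in>S. (\<theta> e i * a i) * u i x)"
      by (rule ub[OF S(1,2)]) (use \<theta>b[OF that] in auto)
    moreover have "(\<lambda>x. \<Sum>i\<in>S. \<theta> e i * (\<theta> e i * a i) * u i x) = (\<lambda>x. \<Sum>i\<in>S. a i * u i x)"
    proof (intro ext sum.cong refl)
      fix x i
      have "\<theta> e i * (\<theta> e i * a i) * u i x = (\<theta> e i * \<theta> e i) * a i * u i x" by (simp add: algebra_simps)
      then show "\<theta> e i * (\<theta> e i * a i) * u i x = a i * u i x" using \<theta>sq[OF that] by simp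
    qed
    ultimately show ?thesis unfolding N_def Fe_def by simp
  qed
  have SVfin: "finite (SV S)" using S(1) by (rule finite_SV)
  have avg_int: "avgS S Ie = (\<integral>x. avgS S (\<lambda>e. cmod (Fe e x) powr p) \<partial>lebesgue)"
    unfolding avgS_def Ie_def using Iei by (simp add: integral_sum)
  have avg_i: "integrable lebesgue (\<lambda>x. avgS S (\<lambda>e. cmod (Fe e x) powr p))"
    unfolding avgS_def using Iei by auto
  define h where "h = (\<lambda>(ts::real \<times> real) x. g (x - fst ts))"
  have gt: "memLp p (\<lambda>x. g (x - s))" for s using g(1) by (rule memLp_transl)
  have g1: "(\<integral>x. cmod (g x) powr p \<partial>lebesgue) = 1"
    using Lp_norm_powr[OF p0, of g] g(2) by simp
  have gti: "(\<integral>x. cmod (g (x - s)) powr p \<partial>lebesgue) = 1" for s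
    using integral_transl[of "\<lambda>x. cmod (g x) powr p" s] g1 by simp
  have JG: "integrable lebesgue (\<lambda>x. (\<Sum>ts\<in>S. wt ts * (cmod (h ts x))\<^sup>2) powr (p / 2))"
     "(\<integral>x. (\<Sum>ts\<in>S. wt ts * (cmod (h ts x))\<^sup>2) powr (p / 2) \<partial>lebesgue) \<le> A powr (p / 2) * 1"
    using jensen_int[OF p S(1) Sne wt0 A_def Apos, of h 1] gt gti unfolding h_def by auto
  have pt_up: "avgS S (\<lambda>e. cmod (Fe e x) powr p) \<le> Bk p * (\<Sum>ts\<in>S. wt ts * (cmod (h ts x))\<^sup>2) powr (p / 2)" for x
    unfolding Fe_ssum h_def using khin_upper[OF S(1) p0, of "cx x"] Q_eq[of x] by simp
  have "avgS S Ie \<le> (\<integral>x. Bk p * (\<Sum>ts\<in>S. wt ts * (cmod (h ts x))\<^sup>2) powr (p / 2) \<partial>lebesgue)"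
    unfolding avg_int by (rule integral_mono[OF avg_i _ pt_up]) (use JG in auto)
  also have "\<dots> \<le> Bk p * A powr (p / 2)"
    using JG Bk_pos[of p] by simp
  finally have avg_up: "avgS S Ie \<le> Bk p * A powr (p / 2)" .
  have Npt: "N powr p \<le> M powr p * Ie e" if "e \<in> SV S" for e
  proof -
    have "N \<le> M * Lp_norm p (Fe e)"
      using unc2[OF that] M1 Lp_norm_nonneg[of p "Fe e"] by (meson mult_right_mono order.trans)
    then have "N powr p \<le> (M * Lp_norm p (Fe e)) powr p" using N0 p0 by (intro powr_mono2) auto
    also have "\<dots> = M powr p * Ie e" using M1 by (simp add: powr_mult Lp_norm_nonneg NeIe)
    finally show ?thesis .
  qed
  have "N powr p = avgS S (\<lambda>e. N powr p)" using S(1) by (simp add: avgS_const)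
  also have "\<dots> \<le> avgS S (\<lambda>e. M powr p * Ie e)" by (rule avgS_mono[OF S(1) Npt])
  also have "\<dots> = M powr p * avgS S Ie" by (rule avgS_cmult)
  also have "\<dots> \<le> M powr p * (Bk p * A powr (p / 2))" by (intro mult_left_mono avg_up) auto
  also have "\<dots> = (M * Bk p powr (1 / p) * sqrt A) powr p"
    using M1 Bk_pos[of p] Apos p0 by (simp add: powr_mult powr_powr sqrt_powr)
  finally have up: "N \<le> M * Bk p powr (1 / p) * sqrt A"
    using N0 M1 Apos p0 by (intro powr_le_cancel_base[of N _ p]) auto
  have closeS: "(\<integral>x. cmod (g (x - fst ts) - g (x - t0)) powr p \<partial>lebesgue) \<le> (1/2) powr p" if "ts \<in> S" for ts
  proof -
    define \<tau> where "\<tau> = fst ts - t0"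
    have \<tau>: "0 \<le> \<tau>" "\<tau> < \<delta>" using S(3)[OF that] unfolding \<tau>_def by auto
    define f where "f = (\<lambda>y. cmod (g (y - \<tau>) - g y) powr p)"
    have "(\<integral>x. cmod (g (x - fst ts) - g (x - t0)) powr p \<partial>lebesgue) = (\<integral>x. f (x - t0) \<partial>lebesgue)"
      unfolding f_def \<tau>_def by (simp add: algebra_simps)
    also have "\<dots> = (\<integral>x. f x \<partial>lebesgue)" by (rule integral_transl)
    also have "\<dots> \<le> (1/2) powr p"
    proof (cases "\<tau> = 0")
      case True then show ?thesis unfolding f_def by simp
    next
      case False
      then have "Lp_norm p (\<lambda>x. transl \<tau> g x - g x) \<le> 1/2" using \<tau> by (intro close) auto
      then have "Lp_norm p (\<lambda>x. transl \<tau> g x - g x) powr p \<le> (1/2) powr p"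
        using p0 by (intro powr_mono2) (auto simp: Lp_norm_nonneg)
      then show ?thesis unfolding Lp_norm_powr[OF p0] f_def transl_def .
    qed
    finally show ?thesis .
  qed
  have LQ: "A powr (p / 2) / 2 powr p \<le> (\<integral>x. (\<Sum>ts\<in>S. wt ts * (cmod (g (x - fst ts)))\<^sup>2) powr (p / 2) \<partial>lebesgue)"
    by (rule lower_Q[OF p S(1) Sne wt0 A_def Apos g(1) g1 closeS])
  have pt_lo: "(\<Sum>ts\<in>S. wt ts * (cmod (g (x - fst ts)))\<^sup>2) powr (p / 2) \<le> avgS S (\<lambda>e. cmod (Fe e x) powr p)" for x
    unfolding Fe_ssum using khin_lower[OF S(1) p, of "cx x"] Q_eq[of x] by simp
  have "A powr (p / 2) / 2 powr p \<le> avgS S Ie"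
    using LQ unfolding avg_int
    by (rule order.trans, intro integral_mono[OF _ avg_i pt_lo]) (use JG(1) in \<open>simp add: h_def\<close>)
  also have "avgS S Ie \<le> avgS S (\<lambda>e. (K * N) powr p)"
  proof (rule avgS_mono[OF S(1)])
    fix e assume e: "e \<in> SV S"
    have "Lp_norm p (Fe e) powr p \<le> (K * N) powr p"
      using unc1[OF e] p0 by (intro powr_mono2) (auto simp: Lp_norm_nonneg)
    then show "Ie e \<le> (K * N) powr p" by (simp add: NeIe)
  qed
  also have "\<dots> = (K * N) powr p" using S(1) by (rule avgS_const)
  finally have lo1: "A powr (p / 2) / 2 powr p \<le> (K * N) powr p" .
  have e0: "restrict (\<lambda>_. 1) S \<in> SV S" unfolding SV_def by auto
  have KN0: "0 \<le> K * N" using unc1[OF e0] Lp_norm_nonneg[of p "Fe (restrict (\<lambda>_. 1) S)"] by linarith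
  have sq: "(sqrt A / 2) powr p = A powr (p / 2) / 2 powr p" using Apos by (simp add: powr_divide sqrt_powr)
  have lo1': "(sqrt A / 2) powr p \<le> (K * N) powr p" using lo1 unfolding sq .
  have sA: "0 \<le> sqrt A / 2" using Apos by simp
  have lo2: "sqrt A / 2 \<le> K * N" by (rule powr_le_cancel_base[OF sA KN0 p0 lo1'])
  have KN: "K * N \<le> M * N" using M1 N0 by (intro mult_right_mono) auto
  have "sqrt A / 2 \<le> N * M" using lo2 KN by (simp add: mult.commute)
  then have "(sqrt A / 2) / M \<le> N" using M1 by (simp add: pos_divide_le_eq)
  moreover have "1 / (2 * M) * sqrt A = (sqrt A / 2) / M" by simp
  ultimately have lo: "1 / (2 * M) * sqrt A \<le> N" by simp
  show ?thesis using up lo unfolding N_def u_def M_def A_def wt_def by simp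
qed



lemma main_inst:
  fixes p K :: real and g :: "real \<Rightarrow> complex" and \<Lambda> :: "(real \<times> real) set" and \<delta> :: real
    and k :: int and a :: "real \<times> real \<Rightarrow> complex"
  assumes p: "2 \<le> p"
    and H: "memLp p g \<and> Lp_norm p g = 1 \<and> countable \<Lambda> \<and>
       K_unconditional_basic p K (gabor_atom g) \<Lambda> \<and>
       \<delta> > 0 \<and> (\<forall>t. 0 < t \<and> t < \<delta> \<longrightarrow> Lp_norm p (\<lambda>x. transl t g x - g x) \<le> 1 / 2)"
  shows "let \<Lambda>k = {ts \<in> \<Lambda>. of_int k * \<delta> \<le> fst ts \<and> fst ts < (of_int k + 1) * \<delta>};
              S = {ts \<in> \<Lambda>k. a ts \<noteq> 0} in
          finite S \<longrightarrow>
            1 / (2 * max K 1) * sqrt (\<Sum>ts\<in>S. (cmod (a ts))\<^sup>2)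
              \<le> Lp_norm p (\<lambda>x. \<Sum>ts\<in>S. a ts * gabor_atom g ts x) \<and>
            Lp_norm p (\<lambda>x. \<Sum>ts\<in>S. a ts * gabor_atom g ts x)
              \<le> max K 1 * Bk p powr (1 / p) * sqrt (\<Sum>ts\<in>S. (cmod (a ts))\<^sup>2)"
  unfolding Let_def
proof (intro impI)
  define S where "S = {ts \<in> {ts \<in> \<Lambda>. of_int k * \<delta> \<le> fst ts \<and> fst ts < (of_int k + 1) * \<delta>}. a ts \<noteq> 0}"
  assume fin: "finite {ts \<in> {ts \<in> \<Lambda>. of_int k * \<delta> \<le> fst ts \<and> fst ts < (of_int k + 1) * \<delta>}. a ts \<noteq> 0}"
  have e: "(of_int k + 1) * \<delta> = of_int k * \<delta> + \<delta>" by (simp add: algebra_simps)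
  have "1 / (2 * max K 1) * sqrt (\<Sum>ts\<in>S. (cmod (a ts))\<^sup>2) \<le> Lp_norm p (\<lambda>x. \<Sum>ts\<in>S. a ts * gabor_atom g ts x)
     \<and> Lp_norm p (\<lambda>x. \<Sum>ts\<in>S. a ts * gabor_atom g ts x) \<le> max K 1 * Bk p powr (1 / p) * sqrt (\<Sum>ts\<in>S. (cmod (a ts))\<^sup>2)"
  proof (rule main_bound[OF p, of g K \<Lambda> \<delta> S "of_int k * \<delta>" a])
    show "memLp p g" "Lp_norm p g = 1" "K_unconditional_basic p K (gabor_atom g) \<Lambda>" using H by auto
    show "\<And>\<tau>. 0 < \<tau> \<Longrightarrow> \<tau> < \<delta> \<Longrightarrow> Lp_norm p (\<lambda>x. transl \<tau> g x - g x) \<le> 1 / 2" using H by auto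
    show "finite S" using fin unfolding S_def .
    show "S \<subseteq> \<Lambda>" unfolding S_def by auto
    show "\<And>ts. ts \<in> S \<Longrightarrow> of_int k * \<delta> \<le> fst ts \<and> fst ts < of_int k * \<delta> + \<delta>"
      unfolding S_def e by auto
    show "\<And>ts. ts \<in> S \<Longrightarrow> a ts \<noteq> 0" unfolding S_def by auto
  qed
  then show "1 / (2 * max K 1) * sqrt (\<Sum>ts\<in>{ts \<in> {ts \<in> \<Lambda>. of_int k * \<delta> \<le> fst ts \<and> fst ts < (of_int k + 1) * \<delta>}. a ts \<noteq> 0}. (cmod (a ts))\<^sup>2)
    \<le> Lp_norm p (\<lambda>x. \<Sum>ts\<in>{ts \<in> {ts \<in> \<Lambda>. of_int k * \<delta> \<le> fst ts \<and> fst ts < (of_int k + 1) * \<delta>}. a ts \<noteq> 0}. a ts * gabor_atom g ts x) \<and>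
    Lp_norm p (\<lambda>x. \<Sum>ts\<in>{ts \<in> {ts \<in> \<Lambda>. of_int k * \<delta> \<le> fst ts \<and> fst ts < (of_int k + 1) * \<delta>}. a ts \<noteq> 0}. a ts * gabor_atom g ts x)
    \<le> max K 1 * Bk p powr (1 / p) * sqrt (\<Sum>ts\<in>{ts \<in> {ts \<in> \<Lambda>. of_int k * \<delta> \<le> fst ts \<and> fst ts < (of_int k + 1) * \<delta>}. a ts \<noteq> 0}. (cmod (a ts))\<^sup>2)"
    unfolding S_def .
qed

theorem mainTheorem10:
  fixes p K :: real
  assumes "2 \<le> p"
  shows "\<exists>c C. c > 0 \<and> C > 0 \<and>
    (\<forall>(g :: real \<Rightarrow> complex) (\<Lambda> :: (real \<times> real) set) (\<delta> :: real).
       memLp p g \<and> Lp_norm p g = 1 \<and> countable \<Lambda> \<and>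
       K_unconditional_basic p K (gabor_atom g) \<Lambda> \<and>
       \<delta> > 0 \<and> (\<forall>t. 0 < t \<and> t < \<delta> \<longrightarrow> Lp_norm p (\<lambda>x. transl t g x - g x) \<le> 1 / 2)
       \<longrightarrow>
       (\<forall>(k :: int) (a :: real \<times> real \<Rightarrow> complex).
          let \<Lambda>k = {ts \<in> \<Lambda>. of_int k * \<delta> \<le> fst ts \<and> fst ts < (of_int k + 1) * \<delta>};
              S = {ts \<in> \<Lambda>k. a ts \<noteq> 0} in
          finite S \<longrightarrow>
            c * sqrt (\<Sum>ts\<in>S. (cmod (a ts))\<^sup>2)
              \<le> Lp_norm p (\<lambda>x. \<Sum>ts\<in>S. a ts * gabor_atom g ts x) \<and>
            Lp_norm p (\<lambda>x. \<Sum>ts\<in>S. a ts * gabor_atom g ts x)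
              \<le> C * sqrt (\<Sum>ts\<in>S. (cmod (a ts))\<^sup>2)))"
proof -
  have c: "0 < 1 / (2 * max K 1)" by (simp add: less_max_iff_disj)
  have C: "0 < max K 1 * Bk p powr (1 / p)"
    using Bk_pos[of p] by (intro mult_pos_pos) (auto simp: less_max_iff_disj)
  show ?thesis
    apply (rule exI[of _ "1 / (2 * max K 1)"], rule exI[of _ "max K 1 * Bk p powr (1 / p)"])
    using c C main_inst[OF assms] by blast
qed


end
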